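(* Let $(\mathcal A,\varphi,\mathcal F,\Phi)$ be a ncps of type B$'$ with associated infinitesimal ncps $(\mathcal B,\varphi,\varphi')$, let $q\in\mathcal F$ with $q^2=q$, $\Phi(q)=1$ and $(\mathcal A,\{q\})$ cyclic-antimonotone independent, and let $p:=1_{\mathcal B}-q$. Then for every $n\in\mathbb N$ and every $\sigma\in\mathrm{NC}(n)$, $$\sum_{\pi\in\mathrm{NC}(n),\ \pi\le\sigma}\kappa'_\pi[p,p,\dots,p]=-|\sigma|.$$
   Context: Ncps of type B$'$ $(\mathcal A,\varphi,\mathcal F,\Phi)$: $\mathcal A$ unital complex algebra, $\varphi(1_{\mathcal A})=1$, $\mathcal F$ an algebra which is an $\mathcal A$-bimodule compatible with its multiplication, $\Phi:\mathcal F\to\mathbb C$ linear. $\mathcal B=\mathcal A\oplus\mathcal F$ with product $(a_1,f_1)(a_2,f_2)=(a_1a_2,a_1f_2+f_1a_2+f_1f_2)$, unit $1_{\mathcal A}$; $\varphi(a+f):=\varphi(a)$, $\varphi'(a+f):=\Phi(f)$. Cyclic-antimonotone independence of $(\mathcal A,\{q\})$: $\Phi(a_0qa_1\cdots a_{n-1}qa_n)=\varphi(a_0a_n)\prod_{i=1}^{n-1}\varphi(a_i)\Phi(q^n)$ for $a_l\in\mathcal A$. $\mathrm{NC}(n)$: noncrossing partitions of $\{1,\dots,n\}$ with the refinement order, $|\sigma|$ the number of blocks. Infinitesimal free cumulants: let $\mathbb G=\mathbb C[\epsilon]/(\epsilon^2)$, $\tilde\varphi=\varphi+\epsilon\varphi':\mathcal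 B\to\mathbb G$, $\tilde\varphi_\pi[b_1,\dots,b_n]=\prod_{V\in\pi}\tilde\varphi(\prod_{i\in V}^{\to}b_i)$ (ordered products over blocks), $\tilde\kappa_\pi=\sum_{\sigma\le\pi}\tilde\varphi_\sigma\,\mu_n(\sigma,\pi)$ with $\mu_n$ the Möbius function of $\mathrm{NC}(n)$; writing $\tilde\kappa_\pi=\kappa_\pi+\epsilon\kappa'_\pi$, $\kappa'_\pi$ is the infinitesimal free cumulant. *)

theory Defs
  imports Complex_Main "HOL-Library.Disjoint_Sets" "HOL-Library.Product_Plus" "HOL-Computational_Algebra.Polynomial"
begin

text \<open>F is a (not necessarily
unital) complex algebra: a ring type 'f with scalar multiplication sF.  la / ra are
the left / right actions of A on F making F an A-bimodule compatible with the
multiplication of F.  phi and Phi are complex-linear functionals.\<close>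

definition cplx_algebra :: "(complex \<Rightarrow> 'a::ring \<Rightarrow> 'a) \<Rightarrow> bool" where
  "cplx_algebra s \<longleftrightarrow> module s \<and>
     (\<forall>c x y. s c (x * y) = s c x * y \<and> s c (x * y) = x * s c y)"

definition ncps_typeB' ::
  "(complex \<Rightarrow> 'a::ring_1 \<Rightarrow> 'a) \<Rightarrow> ('a \<Rightarrow> complex) \<Rightarrow>
   (complex \<Rightarrow> 'f::ring \<Rightarrow> 'f) \<Rightarrow> ('a \<Rightarrow> 'f \<Rightarrow> 'f) \<Rightarrow> ('f \<Rightarrow> 'a \<Rightarrow> 'f) \<Rightarrow>
   ('f \<Rightarrow> complex) \<Rightarrow> bool" where
  "ncps_typeB' sA phi sF la ra Phi \<longleftrightarrow>
     cplx_algebra sA \<and> cplx_algebra sF \<and>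
     module_hom sA (*) phi \<and> phi 1 = 1 \<and>
     module_hom sF (*) Phi \<and>
     \<comment> \<open>bimodule axioms (bilinearity, unit, associativity of the actions)\<close>
     (\<forall>a f g. la a (f + g) = la a f + la a g) \<and>
     (\<forall>a b f. la (a + b) f = la a f + la b f) \<and>
     (\<forall>c a f. la (sA c a) f = sF c (la a f) \<and> la a (sF c f) = sF c (la a f)) \<and>
     (\<forall>f g a. ra (f + g) a = ra f a + ra g a) \<and>
     (\<forall>f a b. ra f (a + b) = ra f a + ra f b) \<and>
     (\<forall>c a f. ra f (sA c a) = sF c (ra f a) \<and> ra (sF c f) a = sF c (ra f a)) \<and>
     (\<forall>f. la 1 f = f) \<and> (\<forall>f. ra f 1 = f) \<and>
     (\<forall>a b f. la (a * b) f = la a (la b f)) \<and>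
     (\<forall>a b f. ra f (a * b) = ra (ra f a) b) \<and>
     (\<forall>a b f. ra (la a f) b = la a (ra f b)) \<and>
     \<comment> \<open>compatibility with the multiplication of F\<close>
     (\<forall>a f g. la a (f * g) = la a f * g) \<and>
     (\<forall>a f g. ra (f * g) a = f * ra g a) \<and>
     (\<forall>a f g. ra f a * g = f * la a g)"

text \<open>Elements of B are pairs (a, f); 1_A is (1, 0), a \<in> A is (a, 0), f \<in> F is (0, f).\<close>

definition bmul :: "('a \<Rightarrow> 'f \<Rightarrow> 'f) \<Rightarrow> ('f \<Rightarrow> 'a \<Rightarrow> 'f) \<Rightarrow>
    ('a::ring_1 \<times> 'f::ring) \<Rightarrow> ('a \<times> 'f) \<Rightarrow> ('a \<times> 'f)" where
  "bmul la ra x y =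
     (fst x * fst y, la (fst x) (snd y) + ra (snd x) (fst y) + snd x * snd y)"

definition bprodlist :: "('a \<Rightarrow> 'f \<Rightarrow> 'f) \<Rightarrow> ('f \<Rightarrow> 'a \<Rightarrow> 'f) \<Rightarrow>
    ('a::ring_1 \<times> 'f::ring) list \<Rightarrow> ('a \<times> 'f)" where
  "bprodlist la ra xs = foldr (bmul la ra) xs (1, 0)"

definition ordprod :: "('a \<Rightarrow> 'f \<Rightarrow> 'f) \<Rightarrow> ('f \<Rightarrow> 'a \<Rightarrow> 'f) \<Rightarrow>
    (nat \<Rightarrow> ('a::ring_1 \<times> 'f::ring)) \<Rightarrow> nat set \<Rightarrow> ('a \<times> 'f)" where
  "ordprod la ra b V = bprodlist la ra (map b (sorted_list_of_set V))"

text \<open>The word a_0 q a_1 q ... q a_n (n \<ge> 1) in B.\<close>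
definition ca_word :: "'f \<Rightarrow> (nat \<Rightarrow> 'a) \<Rightarrow> nat \<Rightarrow> ('a::ring_1 \<times> 'f::ring) list" where
  "ca_word q a n = (a 0, 0) # concat (map (\<lambda>i. [(0, q), (a i, 0)]) [1..<n+1])"

definition cyclic_antimonotone_indep ::
  "('a::ring_1 \<Rightarrow> complex) \<Rightarrow> ('a \<Rightarrow> 'f \<Rightarrow> 'f) \<Rightarrow> ('f \<Rightarrow> 'a \<Rightarrow> 'f) \<Rightarrow>
   ('f::ring \<Rightarrow> complex) \<Rightarrow> 'f \<Rightarrow> bool" where
  "cyclic_antimonotone_indep phi la ra Phi q \<longleftrightarrow>
     (\<forall>n a. n \<ge> 1 \<longrightarrow>
        Phi (snd (bprodlist la ra (ca_word q a n))) =
          phi (a 0 * a n) * (\<Prod>i\<in>{1..<n}. phi (a i)) *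
          Phi (snd (bprodlist la ra (replicate n (0, q)))))"

definition noncrossing :: "nat set set \<Rightarrow> bool" where
  "noncrossing \<pi> \<longleftrightarrow> (\<forall>V\<in>\<pi>. \<forall>W\<in>\<pi>. V \<noteq> W \<longrightarrow>
     \<not> (\<exists>a b c d. a < b \<and> b < c \<and> c < d \<and> a \<in> V \<and> c \<in> V \<and> b \<in> W \<and> d \<in> W))"

definition NC :: "nat \<Rightarrow> nat set set set" where
  "NC n = {\<pi>. partition_on {1..n} \<pi> \<and> noncrossing \<pi>}"

definition refines :: "nat set set \<Rightarrow> nat set set \<Rightarrow> bool" where
  "refines \<pi> \<sigma> \<longleftrightarrow> (\<forall>V\<in>\<pi>. \<exists>W\<in>\<sigma>. V \<subseteq> W)"

text \<open>The recursion descends along strict chains inside P, so a fuel of card P suffices.\<close>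
fun mobius_fuel :: "nat \<Rightarrow> 'p set \<Rightarrow> ('p \<Rightarrow> 'p \<Rightarrow> bool) \<Rightarrow> 'p \<Rightarrow> 'p \<Rightarrow> int" where
  "mobius_fuel 0 P le x y = (if x = y then 1 else 0)"
| "mobius_fuel (Suc k) P le x y =
     (if x = y then 1
      else if le x y then - (\<Sum>z\<in>{z\<in>P. le x z \<and> le z y \<and> z \<noteq> y}. mobius_fuel k P le x z)
      else 0)"

definition mobius :: "'p set \<Rightarrow> ('p \<Rightarrow> 'p \<Rightarrow> bool) \<Rightarrow> 'p \<Rightarrow> 'p \<Rightarrow> int" where
  "mobius P le x y = mobius_fuel (card P) P le x y"

text \<open>G = C[\<epsilon>]/(\<epsilon>^2) is realised inside complex polynomials in \<epsilon>: all
  computations are ring operations, so reading off coefficients 0 and 1 of a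
  polynomial result gives exactly the corresponding element of G.
  tphi b = phi(b) + \<epsilon> phi'(b), with phi(a+f) = phi(a), phi'(a+f) = Phi(f).\<close>

definition tphi :: "('a \<Rightarrow> complex) \<Rightarrow> ('f \<Rightarrow> complex) \<Rightarrow> ('a \<times> 'f) \<Rightarrow> complex poly" where
  "tphi phi Phi x = [: phi (fst x), Phi (snd x) :]"

definition tphi_part :: "('a::ring_1 \<Rightarrow> complex) \<Rightarrow> ('a \<Rightarrow> 'f \<Rightarrow> 'f) \<Rightarrow> ('f \<Rightarrow> 'a \<Rightarrow> 'f) \<Rightarrow>
    ('f::ring \<Rightarrow> complex) \<Rightarrow> (nat \<Rightarrow> ('a \<times> 'f)) \<Rightarrow> nat set set \<Rightarrow> complex poly" where
  "tphi_part phi la ra Phi b \<pi> = (\<Prod>V\<in>\<pi>. tphi phi Phi (ordprod la ra b V))"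

definition tkappa :: "nat \<Rightarrow> ('a::ring_1 \<Rightarrow> complex) \<Rightarrow> ('a \<Rightarrow> 'f \<Rightarrow> 'f) \<Rightarrow> ('f \<Rightarrow> 'a \<Rightarrow> 'f) \<Rightarrow>
    ('f::ring \<Rightarrow> complex) \<Rightarrow> (nat \<Rightarrow> ('a \<times> 'f)) \<Rightarrow> nat set set \<Rightarrow> complex poly" where
  "tkappa n phi la ra Phi b \<pi> =
     (\<Sum>\<sigma>\<in>{\<sigma>\<in>NC n. refines \<sigma> \<pi>}.
        tphi_part phi la ra Phi b \<sigma> * of_int (mobius (NC n) refines \<sigma> \<pi>))"

definition inf_cumulant :: "nat \<Rightarrow> ('a::ring_1 \<Rightarrow> complex) \<Rightarrow> ('a \<Rightarrow> 'f \<Rightarrow> 'f) \<Rightarrow> ('f \<Rightarrow> 'a \<Rightarrow> 'f) \<Rightarrow>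
    ('f::ring \<Rightarrow> complex) \<Rightarrow> (nat \<Rightarrow> ('a \<times> 'f)) \<Rightarrow> nat set set \<Rightarrow> complex" where
  "inf_cumulant n phi la ra Phi b \<pi> = coeff (tkappa n phi la ra Phi b \<pi>) 1"

end

theory Submission
  imports Defs
begin

definition hgt :: "'p set \<Rightarrow> ('p \<Rightarrow> 'p \<Rightarrow> bool) \<Rightarrow> 'p \<Rightarrow> 'p \<Rightarrow> nat" where
  "hgt P le x y = card {w\<in>P. le x w \<and> le w y \<and> w \<noteq> x}"

locale fposet =
  fixes P :: "'p set" and le :: "'p \<Rightarrow> 'p \<Rightarrow> bool"
  assumes fin: "finite P"
    and prefl: "x \<in> P \<Longrightarrow> le x x"
    and ptrans: "x \<in> P \<Longrightarrow> y \<in> P \<Longrightarrow> z \<in> P \<Longrightarrow> le x y \<Longrightarrow> le y z \<Longrightarrow> le x z"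
    and pantisym: "x \<in> P \<Longrightarrow> y \<in> P \<Longrightarrow> le x y \<Longrightarrow> le y x \<Longrightarrow> x = y"
begin

lemma hgt_less:
  assumes "x \<in> P" "y \<in> P" "z \<in> P" "le x z" "le z y" "z \<noteq> y"
  shows "hgt P le x z < hgt P le x y"
proof -
  have sub: "{w\<in>P. le x w \<and> le w z \<and> w \<noteq> x} \<subseteq> {w\<in>P. le x w \<and> le w y \<and> w \<noteq> x} - {y}"
    using assms ptrans pantisym by blast
  have "x \<noteq> y" using assms pantisym by blast
  hence yin: "y \<in> {w\<in>P. le x w \<and> le w y \<and> w \<noteq> x}" using assms prefl ptrans by blast
  have "card {w\<in>P. le x w \<and> le w z \<and> w \<noteq> x} \<le> card ({w\<in>P. le x w \<and> le w y \<and> w \<noteq> x} - {y})"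
    by (rule card_mono) (use fin sub in auto)
  also have "\<dots> < card {w\<in>P. le x w \<and> le w y \<and> w \<noteq> x}"
    by (rule card_Diff1_less[OF _ yin]) (use fin in auto)
  finally show ?thesis unfolding hgt_def .
qed

lemma hgt_le: "hgt P le x y \<le> card P"
  unfolding hgt_def by (rule card_mono[OF fin]) auto

lemma fuel_step:
  "\<And>x y. x \<in> P \<Longrightarrow> y \<in> P \<Longrightarrow> hgt P le x y \<le> k \<Longrightarrow>
     mobius_fuel (Suc k) P le x y = mobius_fuel k P le x y"
proof (induction k)
  case 0
  show ?case
  proof (cases "x = y \<or> \<not> le x y")
    case True
    then show ?thesis by auto
  next
    case False
    then have "y \<in> {w\<in>P. le x w \<and> le w y \<and> w \<noteq> x}" using 0 prefl by auto
    then have "hgt P le x y > 0" unfolding hgt_def using fin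
      by (metis (no_types, lifting) card_gt_0_iff empty_iff finite_subset mem_Collect_eq subsetI)
    then show ?thesis using 0 by simp
  qed
next
  case (Suc k)
  show ?case
  proof (cases "x = y \<or> \<not> le x y")
    case True
    then show ?thesis by auto
  next
    case False
    have "(\<Sum>z\<in>{z\<in>P. le x z \<and> le z y \<and> z \<noteq> y}. mobius_fuel (Suc k) P le x z) =
          (\<Sum>z\<in>{z\<in>P. le x z \<and> le z y \<and> z \<noteq> y}. mobius_fuel k P le x z)"
    proof (rule sum.cong[OF refl])
      fix z assume z: "z \<in> {z\<in>P. le x z \<and> le z y \<and> z \<noteq> y}"
      then have "hgt P le x z < hgt P le x y" using hgt_less Suc.prems by auto
      then show "mobius_fuel (Suc k) P le x z = mobius_fuel k P le x z"
        using Suc.IH Suc.prems z by auto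
    qed
    then show ?thesis using False by simp
  qed
qed

lemma mobius_refl: "mobius P le x x = 1"
  unfolding mobius_def by (cases "card P") auto

lemma mobius_rec:
  assumes "x \<in> P" "y \<in> P" "le x y" "x \<noteq> y"
  shows "mobius P le x y = - (\<Sum>z\<in>{z\<in>P. le x z \<and> le z y \<and> z \<noteq> y}. mobius P le x z)"
proof -
  obtain k where k: "card P = Suc k" using assms fin
    by (metis card_0_eq empty_iff not0_implies_Suc)
  have "(\<Sum>z\<in>{z\<in>P. le x z \<and> le z y \<and> z \<noteq> y}. mobius_fuel k P le x z) =
        (\<Sum>z\<in>{z\<in>P. le x z \<and> le z y \<and> z \<noteq> y}. mobius P le x z)"
  proof (rule sum.cong[OF refl])
    fix z assume z: "z \<in> {z\<in>P. le x z \<and> le z y \<and> z \<noteq> y}"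
    then have "hgt P le x z < hgt P le x y" using hgt_less assms by auto
    with hgt_le[of x y] k have "hgt P le x z \<le> k" by simp
    then show "mobius_fuel k P le x z = mobius P le x z"
      unfolding mobius_def k using fuel_step[of x z k] assms z by auto
  qed
  then show ?thesis unfolding mobius_def k using assms by simp
qed

lemma mobius_sum:
  assumes "x \<in> P" "y \<in> P" "le x y"
  shows "(\<Sum>z\<in>{z\<in>P. le x z \<and> le z y}. mobius P le x z) = (if x = y then 1 else 0)"
proof (cases "x = y")
  case True
  then have "{z\<in>P. le x z \<and> le z y} = {x}" using assms pantisym prefl by auto
  then show ?thesis using True by (simp add: mobius_refl)
next
  case False
  have eq: "{z\<in>P. le x z \<and> le z y} = insert y {z\<in>P. le x z \<and> le z y \<and> z \<noteq> y}"
    using assms prefl by auto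
  have "(\<Sum>z\<in>{z\<in>P. le x z \<and> le z y}. mobius P le x z) =
        mobius P le x y + (\<Sum>z\<in>{z\<in>P. le x z \<and> le z y \<and> z \<noteq> y}. mobius P le x z)"
    unfolding eq by (rule sum.insert) (use fin in auto)
  then show ?thesis using mobius_rec[OF assms False] False by simp
qed

lemma inversion:
  fixes f :: "'p \<Rightarrow> 'r::comm_ring_1"
  assumes "y \<in> P"
  shows "(\<Sum>u\<in>{u\<in>P. le u y}. \<Sum>x\<in>{x\<in>P. le x u}. f x * of_int (mobius P le x u)) = f y"
proof -
  let ?S = "{u\<in>P. le u y}"
  have fS: "finite ?S" using fin by auto
  have "(\<Sum>u\<in>?S. \<Sum>x\<in>{x\<in>P. le x u}. f x * of_int (mobius P le x u)) =
        (\<Sum>u\<in>?S. \<Sum>x\<in>{x. x \<in> ?S \<and> le x u}. f x * of_int (mobius P le x u))"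
  proof (rule sum.cong[OF refl])
    fix u assume "u \<in> ?S"
    then have "{x\<in>P. le x u} = {x. x \<in> ?S \<and> le x u}" using ptrans assms by blast
    then show "(\<Sum>x\<in>{x\<in>P. le x u}. f x * of_int (mobius P le x u)) =
        (\<Sum>x\<in>{x. x \<in> ?S \<and> le x u}. f x * of_int (mobius P le x u))" by simp
  qed
  also have "\<dots> = (\<Sum>x\<in>?S. \<Sum>u\<in>{u. u \<in> ?S \<and> le x u}. f x * of_int (mobius P le x u))"
    by (rule sum.swap_restrict[symmetric]) (use fS in auto)
  also have "\<dots> = (\<Sum>x\<in>?S. f x * of_int (if x = y then 1 else 0))"
  proof (rule sum.cong[OF refl])
    fix x assume x: "x \<in> ?S"
    have "{u. u \<in> ?S \<and> le x u} = {z\<in>P. le x z \<and> le z y}" by auto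
    then have "(\<Sum>u\<in>{u. u \<in> ?S \<and> le x u}. f x * of_int (mobius P le x u)) =
          f x * of_int (\<Sum>z\<in>{z\<in>P. le x z \<and> le z y}. mobius P le x z)"
      by (simp add: sum_distrib_left)
    also have "\<dots> = f x * of_int (if x = y then 1 else 0)"
      using mobius_sum[of x y] x assms by simp
    finally show "(\<Sum>u\<in>{u. u \<in> ?S \<and> le x u}. f x * of_int (mobius P le x u)) =
          f x * of_int (if x = y then 1 else 0)" .
  qed
  also have "\<dots> = f y" using assms prefl fS
    by (simp add: sum.delta' if_distrib cong: if_cong)
  finally show ?thesis .
qed

end

lemma NC_poset: "fposet (NC n) refines"
proof
  show "finite (NC n)"
  proof (rule finite_subset)
    show "NC n \<subseteq> Pow (Pow {1..n})" unfolding NC_def partition_on_def by auto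
  qed auto
next
  fix x assume "x \<in> NC n" then show "refines x x" unfolding refines_def by auto
next
  fix x y z assume "x \<in> NC n" "y \<in> NC n" "z \<in> NC n" "refines x y" "refines y z"
  then show "refines x z" unfolding refines_def by (meson order_trans)
next
  fix x y assume xy: "x \<in> NC n" "y \<in> NC n" "refines x y" "refines y x"
  show "x = y"
  proof -
  have px: "partition_on {1..n} x" and py: "partition_on {1..n} y" using xy unfolding NC_def by auto
  have sub: "a \<subseteq> b" if h: "partition_on {1..n} a" "partition_on {1..n} b"
    "refines a b" "refines b a" for a b
  proof
    fix V assume V: "V \<in> a"
    obtain W where W: "W \<in> b" "V \<subseteq> W" using h(3) V unfolding refines_def by blast
    obtain V' where V': "V' \<in> a" "W \<subseteq> V'" using h(4) W unfolding refines_def by blast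
    have "V \<noteq> {}" using h(1) V unfolding partition_on_def by auto
    have VV: "V \<subseteq> V'" using W V' by auto
    have "V = V'"
    proof (rule ccontr)
      assume "V \<noteq> V'"
      then have "V \<inter> V' = {}" using disjointD[OF partition_onD2[OF h(1)] V V'(1)] by blast
      then show False using VV \<open>V \<noteq> {}\<close> by blast
    qed
    then show "V \<in> b" using W V' by auto
  qed
  show "x = y" using sub[OF px py xy(3,4)] sub[OF py px xy(4,3)] by (rule subset_antisym)
  qed
qed

lemma coeff_pow: "coeff ([:1, -1:] ^ k :: complex poly) 0 = 1 \<and> coeff ([:1, -1:] ^ k :: complex poly) 1 = - of_nat k"
proof (induction k)
  case 0
  show ?case by simp
next
  case (Suc k)
  let ?q = "[:1, -1:] ^ k :: complex poly"
  have e: "[:1, -1:] ^ Suc k = smult 1 ?q + pCons 0 ([: -1 :] * ?q)"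
    by (simp only: power_Suc mult_pCons_left)
  have "coeff ([:1, -1:] ^ Suc k :: complex poly) 0 = coeff ?q 0"
    unfolding e by simp
  moreover have "coeff ([:1, -1:] ^ Suc k :: complex poly) 1 = coeff ?q 1 - coeff ?q 0"
    unfolding e by (simp add: coeff_pCons)
  ultimately show ?case using Suc.IH by simp
qed

theorem lemmaA1:
  fixes sA :: "complex \<Rightarrow> 'a::ring_1 \<Rightarrow> 'a" and phi :: "'a \<Rightarrow> complex"
    and sF :: "complex \<Rightarrow> 'f::ring \<Rightarrow> 'f" and la :: "'a \<Rightarrow> 'f \<Rightarrow> 'f"
    and ra :: "'f \<Rightarrow> 'a \<Rightarrow> 'f" and Phi :: "'f \<Rightarrow> complex"
    and q :: 'f and n :: nat and \<sigma> :: "nat set set"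
  assumes "ncps_typeB' sA phi sF la ra Phi"
    and "q * q = q" and "Phi q = 1"
    and "cyclic_antimonotone_indep phi la ra Phi q"
    and "n \<ge> 1" and "\<sigma> \<in> NC n"
  shows "(\<Sum>\<pi>\<in>{\<pi>\<in>NC n. refines \<pi> \<sigma>}.
            inf_cumulant n phi la ra Phi (\<lambda>_. ((1, 0) - (0, q))) \<pi>) = - of_nat (card \<sigma>)"
proof -
  interpret fposet "NC n" refines by (rule NC_poset)
  define b :: "nat \<Rightarrow> 'a \<times> 'f" where "b = (\<lambda>_. ((1, 0) - (0, q)))"
  have pdef: "(1, 0) - (0, q) = ((1::'a), - q)" by simp
  have la1: "\<And>f. la 1 f = f" and ra1: "\<And>f. ra f 1 = f"
    using assms(1) unfolding ncps_typeB'_def by auto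
  have hom: "module_hom sF (*) Phi" using assms(1) unfolding ncps_typeB'_def by auto
  have Phineg: "Phi (- q) = -1"
  proof -
    have "Phi (- q + q) = Phi (- q) + Phi q" by (rule module_hom.add[OF hom])
    moreover have "Phi 0 = Phi 0 + Phi 0" using module_hom.add[OF hom, of 0 0] by simp
    ultimately have h: "1 + Phi (- q) = 0" using assms(3) by simp
    have "Phi (- q) = (1 + Phi (- q)) - 1" by simp
    also have "\<dots> = -1" using h by simp
    finally show ?thesis .
  qed
  have rep: "bprodlist la ra (replicate (Suc m) ((1::'a), - q)) = (1, - q)" for m
  proof (induction m)
    case 0
    show ?case unfolding bprodlist_def bmul_def by (simp add: la1 ra1)
  next
    case (Suc m)
    have "bprodlist la ra (replicate (Suc (Suc m)) ((1::'a), - q)) =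
          bmul la ra (1, - q) (bprodlist la ra (replicate (Suc m) ((1::'a), - q)))"
      unfolding bprodlist_def by (simp only: replicate_Suc foldr_Cons o_apply)
    also have "\<dots> = bmul la ra (1, - q) (1, - q)" using Suc.IH by simp
    also have "\<dots> = (1, - q)" unfolding bmul_def using assms(2) by (simp add: la1 ra1)
    finally show ?case .
  qed
  have blk: "tphi phi Phi (ordprod la ra b V) = [:1, -1:]" if "V \<in> \<sigma>" for V
  proof -
    have "partition_on {1..n} \<sigma>" using assms(6) unfolding NC_def by auto
    then have "V \<noteq> {}" "V \<subseteq> {1..n}" using that unfolding partition_on_def by auto
    then have fV: "finite V" using finite_subset by blast
    have cV: "card V > 0" using fV \<open>V \<noteq> {}\<close> card_gt_0_iff by blast
    then obtain m where m: "card V = Suc m" using not0_implies_Suc by blast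
    have "map b (sorted_list_of_set V) = replicate (card V) ((1::'a), - q)"
      unfolding b_def pdef by (simp add: map_replicate_const)
    then have "ordprod la ra b V = (1, - q)" unfolding ordprod_def m using rep by simp
    then show ?thesis unfolding tphi_def using assms(1) Phineg
      unfolding ncps_typeB'_def by simp
  qed
  have tp: "tphi_part phi la ra Phi b \<sigma> = [:1, -1:] ^ card \<sigma>"
    unfolding tphi_part_def using blk by simp
  have "(\<Sum>\<pi>\<in>{\<pi>\<in>NC n. refines \<pi> \<sigma>}. inf_cumulant n phi la ra Phi b \<pi>) =
        coeff (\<Sum>\<pi>\<in>{\<pi>\<in>NC n. refines \<pi> \<sigma>}. tkappa n phi la ra Phi b \<pi>) 1"
    unfolding inf_cumulant_def by (simp add: coeff_sum)
  also have "(\<Sum>\<pi>\<in>{\<pi>\<in>NC n. refines \<pi> \<sigma>}. tkappa n phi la ra Phi b \<pi>) = tphi_part phi la ra Phi b \<sigma>"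
    unfolding tkappa_def by (rule inversion[OF assms(6)])
  finally show ?thesis using tp coeff_pow unfolding b_def by simp
qed

end
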